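(* Let $n\ge 1$ and let $r_1,\ldots,r_n$ be independent Rademacher random variables (each equal to $\pm1$ with probability $1/2$). For $x\in\mathbb{R}^n$ and a positive integer $q$ define $$\mathbf{R}_q(x) = \mathbf{E}\Big(\sum_{i\neq j} x_i x_j r_i r_j\Big)^q,$$ where the sum runs over ordered pairs $(i,j)$ with $i,j\in\{1,\ldots,n\}$, $i\ne j$. Then for every positive integer $q$, $\mathbf{R}_q(x)$ is a Schur-concave function of $(x_1^2,\ldots,x_n^2)$.
   Context: A function $f$ on $[0,\infty)^n$ is Schur-concave if $f(a)\ge f(b)$ whenever $a$ is majorized by $b$ (the sum of the $k$ largest entries of $a$ is at most that of $b$ for every $k$, with equal total sums). *)

theory Defs
  imports Main "HOL-Library.FuncSet" Complex_Main
begin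

text \<open>Vectors in R^n are functions nat => real, only the coordinates 0..n-1 matter.\<close>

definition top_sum :: "nat \<Rightarrow> (nat \<Rightarrow> real) \<Rightarrow> nat \<Rightarrow> real" where
  "top_sum n a k = Max {sum a S | S. S \<subseteq> {..<n} \<and> card S = k}"

definition majorized :: "nat \<Rightarrow> (nat \<Rightarrow> real) \<Rightarrow> (nat \<Rightarrow> real) \<Rightarrow> bool" where
  "majorized n a b \<longleftrightarrow> (\<forall>k\<le>n. top_sum n a k \<le> top_sum n b k) \<and>
      (\<Sum>i<n. a i) = (\<Sum>i<n. b i)"

definition schur_concave :: "nat \<Rightarrow> ((nat \<Rightarrow> real) \<Rightarrow> real) \<Rightarrow> bool" where
  "schur_concave n f \<longleftrightarrow> (\<forall>a b. (\<forall>i<n. a i \<ge> 0) \<longrightarrow> (\<forall>i<n. b i \<ge> 0) \<longrightarrow>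
      majorized n a b \<longrightarrow> f a \<ge> f b)"

text \<open>R_q(x): expectation over independent Rademacher signs r_0..r_{n-1}, i.e. the
  uniform average over all 2^n sign vectors.\<close>
definition Rq :: "nat \<Rightarrow> nat \<Rightarrow> (nat \<Rightarrow> real) \<Rightarrow> real" where
  "Rq n q x = (1 / 2 ^ n) *
     (\<Sum>r\<in>PiE {..<n} (\<lambda>_. {-1, 1::real}).
        (\<Sum>(i,j)\<in>{(i,j). i < n \<and> j < n \<and> i \<noteq> j}. x i * x j * r i * r j) ^ q)"

end

theory Submission
  imports Defs "HOL-Combinatorics.Permutations"
begin

lemma sum_PiE_insert:
  assumes "j \<notin> J"
  shows "(\<Sum>r\<in>PiE (insert j J) B. F r) = (\<Sum>y\<in>B j. \<Sum>g\<in>PiE J B. F (g(j:=y)))"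
proof -
  have "(\<Sum>r\<in>PiE (insert j J) B. F r) = (\<Sum>p\<in>B j \<times> PiE J B. F ((\<lambda>(y, g). g(j := y)) p))"
    unfolding PiE_insert_eq by (rule sum.reindex[OF inj_combinator[OF assms], unfolded comp_def])
  also have "\<dots> = (\<Sum>y\<in>B j. \<Sum>g\<in>PiE J B. F (g(j:=y)))"
    by (simp add: sum.cartesian_product split_def)
  finally show ?thesis .
qed

lemma sq_offdiag:
  fixes x g :: "nat \<Rightarrow> real"
  assumes "finite I" "\<And>i. i \<in> I \<Longrightarrow> g i ^ 2 = 1"
  shows "(\<Sum>(i,l)\<in>{(i,l). i\<in>I \<and> l\<in>I \<and> i\<noteq>l}. x i * x l * g i * g l)
     = (\<Sum>i\<in>I. x i * g i)^2 - (\<Sum>i\<in>I. x i ^ 2)"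
proof -
  let ?D = "{(i,l). i\<in>I \<and> l\<in>I \<and> i\<noteq>l}"
  let ?E = "(\<lambda>i. (i,i)) ` I"
  let ?h = "\<lambda>(i,l). x i * x l * g i * g l"
  have fin: "finite (I \<times> I)" using assms by simp
  have II: "I \<times> I = ?D \<union> ?E" by auto
  have "(\<Sum>i\<in>I. x i * g i)^2 = (\<Sum>p\<in>I \<times> I. ?h p)"
    by (simp add: power2_eq_square sum_product sum.cartesian_product mult_ac)
  also have "\<dots> = sum ?h ?D + sum ?h ?E"
    unfolding II by (rule sum.union_disjoint) (use fin II in \<open>auto\<close>)
  also have "sum ?h ?E = (\<Sum>i\<in>I. x i ^ 2)"
    by (subst sum.reindex) (auto intro: inj_onI sum.cong simp: power2_eq_square assms(2)[unfolded power2_eq_square] mult_ac)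
  finally show ?thesis by simp
qed

definition monor :: "nat set \<Rightarrow> (nat \<Rightarrow> nat) \<Rightarrow> (nat \<Rightarrow> real) \<Rightarrow> real" where
  "monor I e g = (\<Prod>i\<in>I. g i ^ e i)"

abbreviation SG :: "nat set \<Rightarrow> (nat \<Rightarrow> real) set" where
  "SG I \<equiv> PiE I (\<lambda>_. {-1, 1::real})"

definition cone :: "nat set \<Rightarrow> ((nat \<Rightarrow> real) \<Rightarrow> real) \<Rightarrow> bool" where
  "cone I F \<longleftrightarrow> (\<forall>e. 0 \<le> (\<Sum>g\<in>SG I. F g * monor I e g))"

lemma aux_pm: "0 \<le> (-1::real)^k + 1" by (cases "even k") auto

lemma cone_one: assumes "finite I" shows "cone I (\<lambda>_. 1)"
proof -
  have "(\<Sum>g\<in>SG I. monor I e g) = (\<Prod>i\<in>I. \<Sum>y\<in>{-1,1::real}. y ^ e i)" for e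
    unfolding monor_def by (rule prod_sum_PiE[symmetric]) (use assms in auto)
  moreover have "0 \<le> (\<Prod>i\<in>I. \<Sum>y\<in>{-1,1::real}. y ^ e i)" for e
    by (rule prod_nonneg) (auto simp: aux_pm)
  ultimately show ?thesis unfolding cone_def by simp
qed

lemma cone_var:
  assumes "finite I" "i \<in> I" "cone I F"
  shows "cone I (\<lambda>g. F g * g i)"
  unfolding cone_def
proof
  fix e
  have "g i * monor I e g = monor I (e(i := Suc (e i))) g" for g
  proof -
    have "monor I (e(i := Suc (e i))) g = g i ^ Suc (e i) * (\<Prod>l\<in>I - {i}. g l ^ e l)"
      unfolding monor_def using assms by (subst prod.remove[of _ i]) (auto intro!: prod.cong)
    also have "\<dots> = g i * monor I e g"
      unfolding monor_def using assms by (subst (2) prod.remove[of _ i]) auto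
    finally show ?thesis by simp
  qed
  then have "(\<Sum>g\<in>SG I. F g * g i * monor I e g) = (\<Sum>g\<in>SG I. F g * monor I (e(i := Suc (e i))) g)"
    by (simp add: mult.assoc)
  then show "0 \<le> (\<Sum>g\<in>SG I. F g * g i * monor I e g)"
    using assms(3) unfolding cone_def by simp
qed

lemma cone_sum:
  assumes "finite K" "\<And>k. k \<in> K \<Longrightarrow> cone I (F k)" "\<And>k. k \<in> K \<Longrightarrow> 0 \<le> c k"
  shows "cone I (\<lambda>g. \<Sum>k\<in>K. c k * F k g)"
  unfolding cone_def
proof
  fix e
  have "(\<Sum>g\<in>SG I. (\<Sum>k\<in>K. c k * F k g) * monor I e g) = (\<Sum>k\<in>K. c k * (\<Sum>g\<in>SG I. F k g * monor I e g))"
    by (simp add: sum_distrib_right sum_distrib_left mult.assoc sum.swap[of _ "SG I"])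
  also have "0 \<le> \<dots>"
    by (rule sum_nonneg, rule mult_nonneg_nonneg) (use assms in \<open>auto simp: cone_def\<close>)
  finally show "0 \<le> (\<Sum>g\<in>SG I. (\<Sum>k\<in>K. c k * F k g) * monor I e g)" .
qed

definition Tg :: "nat set \<Rightarrow> (nat \<Rightarrow> real) \<Rightarrow> (nat \<Rightarrow> real) \<Rightarrow> real" where
  "Tg I x g = (\<Sum>i\<in>I. x i * g i)"

definition Sd :: "nat set \<Rightarrow> (nat \<Rightarrow> real) \<Rightarrow> (nat \<Rightarrow> real) \<Rightarrow> real" where
  "Sd I x g = (\<Sum>(i,l)\<in>{(i,l). i\<in>I \<and> l\<in>I \<and> i\<noteq>l}. x i * x l * g i * g l)"

lemma cone_T:
  assumes "finite I" "\<And>i. i \<in> I \<Longrightarrow> 0 \<le> x i" "cone I F"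
  shows "cone I (\<lambda>g. F g * Tg I x g)"
proof -
  have "cone I (\<lambda>g. \<Sum>i\<in>I. x i * (F g * g i))"
    by (rule cone_sum) (use assms cone_var in auto)
  then show ?thesis unfolding Tg_def by (simp add: sum_distrib_left mult_ac)
qed

lemma cone_S:
  assumes "finite I" "\<And>i. i \<in> I \<Longrightarrow> 0 \<le> x i" "cone I F"
  shows "cone I (\<lambda>g. F g * Sd I x g)"
proof -
  let ?D = "{(i,l). i\<in>I \<and> l\<in>I \<and> i\<noteq>l}"
  have fD: "finite ?D" by (rule finite_subset[of _ "I \<times> I"]) (use assms in auto)
  have "cone I (\<lambda>g. \<Sum>p\<in>?D. (x (fst p) * x (snd p)) * (F g * g (fst p) * g (snd p)))"
    by (rule cone_sum[OF fD]) (use assms cone_var in auto)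
  then show ?thesis unfolding Sd_def by (simp add: sum_distrib_left mult_ac split_def)
qed

definition Mom :: "nat set \<Rightarrow> (nat \<Rightarrow> real) \<Rightarrow> nat \<Rightarrow> nat \<Rightarrow> real" where
  "Mom I x b d = (\<Sum>g\<in>SG I. Tg I x g ^ b * (Tg I x g ^ 2 - (\<Sum>i\<in>I. x i ^ 2)) ^ d)"

lemma Mom_nonneg:
  assumes "finite I" "\<And>i. i \<in> I \<Longrightarrow> 0 \<le> x i"
  shows "0 \<le> Mom I x b d"
proof -
  have c1: "cone I (\<lambda>g. Tg I x g ^ b)"
  proof (induction b)
    case 0 then show ?case using cone_one[OF assms(1)] by simp
  next
    case (Suc b)
    have "cone I (\<lambda>g. Tg I x g ^ b * Tg I x g)" by (rule cone_T[OF assms(1)]) (use assms Suc in auto)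
    then show ?case by (simp add: mult_ac)
  qed
  have c2: "cone I (\<lambda>g. Tg I x g ^ b * Sd I x g ^ d)"
  proof (induction d)
    case 0 then show ?case using c1 by simp
  next
    case (Suc d)
    have "cone I (\<lambda>g. Tg I x g ^ b * Sd I x g ^ d * Sd I x g)" by (rule cone_S[OF assms(1)]) (use assms Suc in auto)
    then show ?case by (simp add: mult_ac)
  qed
  have "Mom I x b d = (\<Sum>g\<in>SG I. Tg I x g ^ b * Sd I x g ^ d * monor I (\<lambda>_. 0) g)"
    unfolding Mom_def monor_def
  proof (rule sum.cong[OF refl])
    fix g assume g: "g \<in> SG I"
    have "Sd I x g = Tg I x g ^ 2 - (\<Sum>i\<in>I. x i ^ 2)"
      unfolding Sd_def Tg_def by (rule sq_offdiag) (use assms g in \<open>auto simp: PiE_iff\<close>)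
    then show "Tg I x g ^ b * (Tg I x g ^ 2 - (\<Sum>i\<in>I. x i ^ 2)) ^ d = Tg I x g ^ b * Sd I x g ^ d * (\<Prod>i\<in>I. g i ^ 0)"
      by simp
  qed
  then show ?thesis using c2 unfolding cone_def by simp
qed

lemma pm_mono:
  fixes t t' :: real
  assumes "0 \<le> t" "t \<le> t'"
  shows "t ^ k + (-t) ^ k \<le> t' ^ k + (-t') ^ k"
proof (cases "even k")
  case True
  then have "t ^ k \<le> t' ^ k" using assms by (intro power_mono) auto
  then show ?thesis using True by simp
next
  case False then show ?thesis by simp
qed

lemma P_mono:
  fixes s t t' :: real
  assumes "0 \<le> s" "0 \<le> t" "t \<le> t'"
  shows "t^a * (s+t)^m + (-t)^a * (s-t)^m \<le> t'^a * (s+t')^m + (-t')^a * (s-t')^m"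
proof -
  have eq: "t^a * (s+t)^m + (-t)^a * (s-t)^m = (\<Sum>i\<le>m. of_nat (m choose i) * s^(m-i) * (t^(a+i) + (-t)^(a+i)))" for t
  proof -
    have "(s+t)^m = (\<Sum>i\<le>m. of_nat (m choose i) * t^i * s^(m-i))"
      using binomial_ring[of t s m] by (simp add: add.commute)
    moreover have "(s-t)^m = (\<Sum>i\<le>m. of_nat (m choose i) * (-t)^i * s^(m-i))"
      using binomial_ring[of "-t" s m] by (simp add: add.commute)
    ultimately show ?thesis
      by (simp add: sum_distrib_left sum.distrib[symmetric] power_add algebra_simps)
  qed
  show ?thesis unfolding eq
    by (rule sum_mono, rule mult_left_mono) (use assms pm_mono in auto)
qed

definition Psi :: "nat set \<Rightarrow> (nat \<Rightarrow> real) \<Rightarrow> nat \<Rightarrow> real \<Rightarrow> real \<Rightarrow> real" where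
  "Psi I x q s c = (\<Sum>g\<in>SG I. ((c + Tg I x g)^2 - (s + (\<Sum>i\<in>I. x i ^ 2)))^q)"

lemma Psi_expand:
  "Psi I x q s c = (\<Sum>a\<le>q. \<Sum>b\<le>q-a. of_nat (q choose a) * of_nat ((q-a) choose b) * (c^2-s)^a * (2*c)^b * Mom I x b (q-a-b))"
proof -
  let ?A = "\<Sum>i\<in>I. x i ^ 2"
  have pt: "((c + T)^2 - (s + ?A))^q = (\<Sum>a\<le>q. \<Sum>b\<le>q-a. of_nat (q choose a) * of_nat ((q-a) choose b) * (c^2-s)^a * (2*c)^b * (T ^ b * (T^2 - ?A)^(q-a-b)))" for T
  proof -
    have "((c + T)^2 - (s + ?A))^q = ((c^2-s) + (2*c*T + (T^2 - ?A)))^q"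
      by (simp add: power2_eq_square algebra_simps)
    also have "\<dots> = (\<Sum>a\<le>q. of_nat (q choose a) * (c^2-s)^a * (2*c*T + (T^2 - ?A))^(q-a))"
      by (rule binomial_ring)
    also have "\<dots> = (\<Sum>a\<le>q. of_nat (q choose a) * (c^2-s)^a * (\<Sum>b\<le>q-a. of_nat ((q-a) choose b) * (2*c*T)^b * (T^2 - ?A)^(q-a-b)))"
      by (simp only: binomial_ring)
    also have "\<dots> = (\<Sum>a\<le>q. \<Sum>b\<le>q-a. of_nat (q choose a) * of_nat ((q-a) choose b) * (c^2-s)^a * (2*c)^b * (T ^ b * (T^2 - ?A)^(q-a-b)))"
      by (simp add: sum_distrib_left power_mult_distrib mult_ac)
    finally show ?thesis .
  qed
  have "Psi I x q s c = (\<Sum>g\<in>SG I. \<Sum>a\<le>q. \<Sum>b\<le>q-a. of_nat (q choose a) * of_nat ((q-a) choose b) * (c^2-s)^a * (2*c)^b * (Tg I x g ^ b * (Tg I x g^2 - ?A)^(q-a-b)))"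
    unfolding Psi_def by (simp only: pt)
  also have "\<dots> = (\<Sum>a\<le>q. \<Sum>b\<le>q-a. \<Sum>g\<in>SG I. of_nat (q choose a) * of_nat ((q-a) choose b) * (c^2-s)^a * (2*c)^b * (Tg I x g ^ b * (Tg I x g^2 - ?A)^(q-a-b)))"
    by (subst sum.swap) (simp add: sum.swap[of _ "SG I"])
  also have "\<dots> = (\<Sum>a\<le>q. \<Sum>b\<le>q-a. of_nat (q choose a) * of_nat ((q-a) choose b) * (c^2-s)^a * (2*c)^b * Mom I x b (q-a-b))"
    unfolding Mom_def by (simp add: sum_distrib_left)
  finally show ?thesis .
qed

definition term2 :: "real \<Rightarrow> real \<Rightarrow> nat \<Rightarrow> nat \<Rightarrow> real" where
  "term2 u v a b = ((u+v)^2 - (u^2+v^2))^a * ((2*(u+v))^b + (2*(-(u+v)))^b)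
                 + ((u-v)^2 - (u^2+v^2))^a * ((2*(u-v))^b + (2*(-(u-v)))^b)"

definition Phi :: "nat set \<Rightarrow> (nat \<Rightarrow> real) \<Rightarrow> nat \<Rightarrow> real \<Rightarrow> real \<Rightarrow> real" where
  "Phi I x q u v = (\<Sum>y\<in>{-1,1::real}. \<Sum>z\<in>{-1,1::real}. Psi I x q (u^2+v^2) (y*u + z*v))"

lemma Phi_expand:
  "Phi I x q u v = (\<Sum>a\<le>q. \<Sum>b\<le>q-a. of_nat (q choose a) * of_nat ((q-a) choose b) * Mom I x b (q-a-b) * term2 u v a b)"
proof -
  have "Phi I x q u v = (Psi I x q (u^2+v^2) (u+v) + Psi I x q (u^2+v^2) (-(u+v)))
        + (Psi I x q (u^2+v^2) (u-v) + Psi I x q (u^2+v^2) (-(u-v)))"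
    unfolding Phi_def by (simp add: algebra_simps)
  also have "\<dots> = (\<Sum>a\<le>q. \<Sum>b\<le>q-a. of_nat (q choose a) * of_nat ((q-a) choose b) * Mom I x b (q-a-b) * term2 u v a b)"
    unfolding Psi_expand term2_def using power2_commute[of v u]
    by (simp add: sum.distrib[symmetric] algebra_simps del: minus_add_distrib)
  finally show ?thesis .
qed

lemma pow2_pair:
  fixes w :: real
  shows "(2*w)^(2*m) + (2*(-w))^(2*m) = 2 * 2^(2*m) * (w^2)^m"
proof -
  have "(2*(-w))^(2*m) = (2*w)^(2*m)"
    by (metis minus_mult_right power_minus_even even_mult_iff even_two_times_div_two dvd_triv_left)
  moreover have "(2*w)^(2*m) = 2^(2*m) * (w^2)^m"
    by (simp add: power_mult_distrib power_mult)
  ultimately show ?thesis by simp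
qed

lemma term2_alt:
  fixes u v :: real
  shows "term2 u v a b = (if even b then 2 * 2^b * ((2*u*v)^a * ((u^2+v^2) + 2*u*v)^(b div 2)
            + (-(2*u*v))^a * ((u^2+v^2) - 2*u*v)^(b div 2)) else 0)"
proof (cases "even b")
  case True
  then obtain m where b: "b = 2*m" by auto
  have e1: "((u+v)^2 - (u^2+v^2)) = 2*u*v" "((u-v)^2 - (u^2+v^2)) = -(2*u*v)"
    by (simp_all add: power2_eq_square algebra_simps)
  have e2: "(u+v)^2 = (u^2+v^2) + 2*u*v" "(u-v)^2 = (u^2+v^2) - 2*u*v"
    by (simp_all add: power2_eq_square algebra_simps)
  have "term2 u v a b = (2*u*v)^a * (2 * 2^(2*m) * ((u+v)^2)^m) + (-(2*u*v))^a * (2 * 2^(2*m) * ((u-v)^2)^m)"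
    unfolding term2_def b e1 pow2_pair by simp
  also have "\<dots> = 2 * 2^b * ((2*u*v)^a * ((u^2+v^2) + 2*u*v)^(b div 2)
            + (-(2*u*v))^a * ((u^2+v^2) - 2*u*v)^(b div 2))"
    unfolding e2 b by (simp add: algebra_simps)
  finally show ?thesis using True by simp
next
  case False
  have h: "(2*w)^b + (2*(-w))^b = 0" for w :: real
    using False by (simp only: mult_minus_right power_minus_odd) simp
  show ?thesis unfolding term2_def h using False by simp
qed

lemma term2_mono:
  fixes u v u' v' :: real
  assumes "0 \<le> u" "0 \<le> v" "u^2+v^2 = u'^2+v'^2" "u*v \<le> u'*v'"
  shows "term2 u v a b \<le> term2 u' v' a b"
proof -
  define s where "s = u'^2+v'^2"
  have s0: "0 \<le> s" unfolding s_def by simp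
  have key: "(2*u*v)^a * (s + 2*u*v)^(b div 2) + (-(2*u*v))^a * (s - 2*u*v)^(b div 2)
     \<le> (2*u'*v')^a * (s + 2*u'*v')^(b div 2) + (-(2*u'*v'))^a * (s - 2*u'*v')^(b div 2)"
    by (rule P_mono[OF s0]) (use assms in auto)
  have "0 \<le> (2::real) * 2^b" by simp
  from mult_left_mono[OF key this] show ?thesis
    unfolding term2_alt using assms(3) by (simp add: s_def)
qed

lemma SG_sq: "g \<in> SG I \<Longrightarrow> i \<in> I \<Longrightarrow> (g i)^2 = (1::real)"
  using PiE_mem[of g I "\<lambda>_. {-1,1::real}" i] by auto

lemma Rq_sq:
  "Rq n q x = 1/2^n * (\<Sum>r\<in>SG {..<n}. ((\<Sum>i<n. x i * r i)^2 - (\<Sum>i<n. x i ^ 2))^q)"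
proof -
  have set: "{(i,j). i < n \<and> j < n \<and> i \<noteq> j} = {(i,l). i\<in>{..<n} \<and> l\<in>{..<n} \<and> i\<noteq>l}" by auto
  have "(\<Sum>(i,j)\<in>{(i,j). i < n \<and> j < n \<and> i \<noteq> j}. x i * x j * r i * r j) = (\<Sum>i<n. x i * r i)^2 - (\<Sum>i<n. x i ^ 2)"
    if "r \<in> SG {..<n}" for r
    unfolding set by (rule sq_offdiag) (use that SG_sq in auto)
  then show ?thesis unfolding Rq_def by (auto intro!: sum.cong)
qed

lemma Rq_Phi:
  assumes "j < n" "k < n" "j \<noteq> k"
  shows "2^n * Rq n q x = Phi ({..<n} - {j,k}) x q (x j) (x k)"
proof -
  define I where "I = {..<n} - {j,k}"
  have U: "{..<n} = insert j (insert k I)" using assms unfolding I_def by auto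
  have jI: "j \<notin> insert k I" and kI: "k \<notin> I" using assms unfolding I_def by auto
  have fI: "finite I" unfolding I_def by simp
  let ?F = "\<lambda>r. ((\<Sum>i\<in>insert j (insert k I). x i * r i)^2 - (\<Sum>i\<in>insert j (insert k I). x i ^ 2))^q"
  have "2^n * Rq n q x = (\<Sum>r\<in>SG (insert j (insert k I)). ?F r)"
    unfolding Rq_sq U by simp
  also have "\<dots> = (\<Sum>y\<in>{-1,1::real}. \<Sum>z\<in>{-1,1::real}. \<Sum>g\<in>SG I. ?F (g(k:=z, j:=y)))"
    by (simp add: sum_PiE_insert[OF jI] sum_PiE_insert[OF kI])
  also have "\<dots> = Phi I x q (x j) (x k)"
    unfolding Phi_def Psi_def
  proof (intro sum.cong refl)
    fix y z g
    have s1: "(\<Sum>i\<in>insert j (insert k I). x i * (g(k:=z, j:=y)) i) = y * x j + z * x k + Tg I x g"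
    proof -
      have "(\<Sum>i\<in>I. x i * (g(k:=z, j:=y)) i) = Tg I x g"
        unfolding Tg_def using jI kI by (intro sum.cong) auto
      then show ?thesis using jI kI fI assms(3) by (simp add: mult.commute)
    qed
    have s2: "(\<Sum>i\<in>insert j (insert k I). x i ^ 2) = (x j ^ 2 + x k ^ 2) + (\<Sum>i\<in>I. x i ^ 2)"
      using jI kI fI by simp
    show "?F (g(k:=z, j:=y)) = ((y * x j + z * x k + Tg I x g)^2 - ((x j ^ 2 + x k ^ 2) + (\<Sum>i\<in>I. x i ^ 2)))^q"
      unfolding s1 s2 ..
  qed
  finally show ?thesis unfolding I_def .
qed

lemma Phi_cong:
  assumes "\<And>i. i \<in> I \<Longrightarrow> x i = x' i"
  shows "Phi I x q u v = Phi I x' q u v"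
proof -
  have "Tg I x = Tg I x'" unfolding Tg_def using assms by (auto intro!: ext sum.cong)
  moreover have "(\<Sum>i\<in>I. x i^2) = (\<Sum>i\<in>I. x' i^2)" using assms by (auto intro!: sum.cong)
  ultimately show ?thesis unfolding Phi_def Psi_def by simp
qed

lemma pair_step:
  assumes jk: "j < n" "k < n" "j \<noteq> k"
    and nb: "\<And>i. i < n \<Longrightarrow> 0 \<le> b i" and nb': "\<And>i. i < n \<Longrightarrow> 0 \<le> b' i"
    and same: "\<And>i. i < n \<Longrightarrow> i \<noteq> j \<Longrightarrow> i \<noteq> k \<Longrightarrow> b' i = b i"
    and sum: "b' j + b' k = b j + b k" and prod: "b j * b k \<le> b' j * b' k"
  shows "Rq n q (\<lambda>i. sqrt (b i)) \<le> Rq n q (\<lambda>i. sqrt (b' i))"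
proof -
  define I where "I = {..<n} - {j,k}"
  define x where "x = (\<lambda>i. sqrt (b i))"
  define x' where "x' = (\<lambda>i. sqrt (b' i))"
  have fI: "finite I" unfolding I_def by simp
  have x0: "\<And>i. i \<in> I \<Longrightarrow> 0 \<le> x i" unfolding I_def x_def using nb by auto
  have "Phi I x q (x j) (x k) \<le> Phi I x q (x' j) (x' k)"
    unfolding Phi_expand
  proof (intro sum_mono mult_left_mono)
    fix aa bb
    show "term2 (x j) (x k) aa bb \<le> term2 (x' j) (x' k) aa bb"
    proof (rule term2_mono)
      show "0 \<le> x j" "0 \<le> x k" unfolding x_def using nb jk by auto
      show "(x j)^2 + (x k)^2 = (x' j)^2 + (x' k)^2"
        unfolding x_def x'_def using nb nb' jk sum by simp
      have "x j * x k = sqrt (b j * b k)" unfolding x_def by (simp add: real_sqrt_mult)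
      also have "\<dots> \<le> sqrt (b' j * b' k)" using prod by simp
      also have "\<dots> = x' j * x' k" unfolding x'_def by (simp add: real_sqrt_mult)
      finally show "x j * x k \<le> x' j * x' k" .
    qed
    show "0 \<le> of_nat (q choose aa) * of_nat ((q-aa) choose bb) * Mom I x bb (q-aa-bb)"
      using Mom_nonneg[OF fI x0] by simp
  qed
  also have "\<dots> = Phi I x' q (x' j) (x' k)"
    by (rule Phi_cong) (use same in \<open>auto simp: I_def x_def x'_def\<close>)
  finally have "2^n * Rq n q x \<le> 2^n * Rq n q x'"
    unfolding I_def Rq_Phi[OF jk] .
  then show ?thesis unfolding x_def x'_def by simp
qed

lemma Rq_cong:
  assumes "\<And>i. i < n \<Longrightarrow> x i = x' i"
  shows "Rq n q x = Rq n q x'"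
proof -
  have "(\<Sum>i<n. x i * r i) = (\<Sum>i<n. x' i * r i)" for r by (rule sum.cong) (auto simp: assms)
  moreover have "(\<Sum>i<n. x i ^ 2) = (\<Sum>i<n. x' i ^ 2)" by (rule sum.cong) (auto simp: assms)
  ultimately show ?thesis unfolding Rq_sq by simp
qed

lemma SG_perm_bij:
  assumes p: "p permutes {..<n}"
  shows "bij_betw (\<lambda>r. r \<circ> p) (SG {..<n}) (SG {..<n})"
proof -
  have ip: "inv p permutes {..<n}" using permutes_inv[OF p] .
  have into: "r \<circ> s \<in> SG {..<n}" if "r \<in> SG {..<n}" "s permutes {..<n}" for r s
    using that permutes_in_image[OF that(2)] permutes_not_in[OF that(2)]
    by (auto simp: PiE_iff extensional_def)
  show ?thesis
  proof (rule bij_betw_byWitness[where f'="\<lambda>r. r \<circ> inv p"])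
    show "\<forall>r\<in>SG {..<n}. r \<circ> p \<circ> inv p = r" using permutes_inv_o[OF p] by (simp add: o_assoc[symmetric])
    show "\<forall>r\<in>SG {..<n}. r \<circ> inv p \<circ> p = r" using permutes_inv_o[OF p] by (simp add: o_assoc[symmetric])
    show "(\<lambda>r. r \<circ> p) ` SG {..<n} \<subseteq> SG {..<n}" using into p by auto
    show "(\<lambda>r. r \<circ> inv p) ` SG {..<n} \<subseteq> SG {..<n}" using into ip by auto
  qed
qed

lemma Rq_perm:
  assumes p: "p permutes {..<n}"
  shows "Rq n q (\<lambda>i. x (p i)) = Rq n q x"
proof -
  have ip: "inv p permutes {..<n}" using permutes_inv[OF p] .
  have s2: "(\<Sum>i<n. x (p i) ^ 2) = (\<Sum>i<n. x i ^ 2)"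
    using sum.permute[OF p, of "\<lambda>i. x i ^ 2"] by (simp add: o_def)
  have s1: "(\<Sum>i<n. x (p i) * r i) = (\<Sum>i<n. x i * (r \<circ> inv p) i)" for r
    using sum.permute[OF p, of "\<lambda>i. x i * (r \<circ> inv p) i"] permutes_inverses[OF p] by (simp add: o_def)
  let ?G = "\<lambda>r. ((\<Sum>i<n. x i * r i)^2 - (\<Sum>i<n. x i ^ 2))^q"
  have "(\<Sum>r\<in>SG {..<n}. ?G (r \<circ> inv p)) = (\<Sum>r\<in>SG {..<n}. ?G r)"
    by (rule sum.reindex_bij_betw[OF SG_perm_bij[OF ip]])
  then show ?thesis unfolding Rq_sq s1 s2 by simp
qed

lemma sort_exists:
  fixes a :: "nat \<Rightarrow> real"
  obtains p where "p permutes {..<n}" "\<And>i j. i \<le> j \<Longrightarrow> j < n \<Longrightarrow> a (p j) \<le> a (p i)"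
proof -
  define xs where "xs = map a [0..<n]"
  define ys where "ys = rev (sort xs)"
  have "mset ys = mset xs" unfolding ys_def by simp
  then obtain p where p: "p permutes {..<length xs}" "permute_list p xs = ys"
    by (rule mset_eq_permutation)
  have len: "length xs = n" "length ys = n" unfolding xs_def ys_def by auto
  have nth: "ys ! i = a (p i)" if "i < n" for i
  proof -
    have "ys ! i = xs ! p i" using permute_list_nth[OF p(1)] p(2) that len by auto
    moreover have "p i < n" using permutes_in_image[OF p(1)] that len by auto
    ultimately show ?thesis unfolding xs_def by simp
  qed
  have sw: "sorted_wrt (\<ge>) ys" unfolding ys_def by (simp add: sorted_wrt_rev)
  show ?thesis
  proof (rule that)
    show "p permutes {..<n}" using p len by simp
    fix i j assume "i \<le> j" "j < n"
    then show "a (p j) \<le> a (p i)"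
    proof (cases "i = j")
      case False
      with \<open>i \<le> j\<close> have "i < j" by simp
      from sorted_wrt_nth_less[OF sw this] \<open>j < n\<close> len nth \<open>i < j\<close> show ?thesis by auto
    qed simp
  qed
qed

lemma top_sum_set_perm:
  assumes p: "p permutes {..<n}"
  shows "{sum (\<lambda>i. a (p i)) S | S. S \<subseteq> {..<n} \<and> card S = k} \<subseteq> {sum a S | S. S \<subseteq> {..<n} \<and> card S = k}"
proof
  fix t assume "t \<in> {sum (\<lambda>i. a (p i)) S | S. S \<subseteq> {..<n} \<and> card S = k}"
  then obtain S where S: "S \<subseteq> {..<n}" "card S = k" "t = sum (\<lambda>i. a (p i)) S" by auto
  have inj: "inj_on p S" using permutes_inj[OF p] by (auto intro: inj_on_subset)
  have "t = sum a (p ` S)" using S(3) sum.reindex[OF inj, of a] by (simp add: o_def)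
  moreover have "p ` S \<subseteq> {..<n}" using S(1) permutes_in_image[OF p] by auto
  moreover have "card (p ` S) = k" using card_image[OF inj] S(2) by simp
  ultimately show "t \<in> {sum a S | S. S \<subseteq> {..<n} \<and> card S = k}" by (intro CollectI exI[of _ "p ` S"]) simp
qed

lemma top_sum_perm:
  assumes p: "p permutes {..<n}"
  shows "top_sum n (\<lambda>i. a (p i)) k = top_sum n a k"
proof -
  have ip: "inv p permutes {..<n}" using permutes_inv[OF p] .
  have eq: "(\<lambda>i. a (p (inv p i))) = a" using permutes_inverses[OF p] by auto
  have "{sum a S | S. S \<subseteq> {..<n} \<and> card S = k} \<subseteq> {sum (\<lambda>i. a (p i)) S | S. S \<subseteq> {..<n} \<and> card S = k}"
    using top_sum_set_perm[OF ip, of "\<lambda>i. a (p i)" k] unfolding eq .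
  with top_sum_set_perm[OF p, of a k]
  have "{sum (\<lambda>i. a (p i)) S | S. S \<subseteq> {..<n} \<and> card S = k} = {sum a S | S. S \<subseteq> {..<n} \<and> card S = k}"
    by (rule subset_antisym)
  then show ?thesis unfolding top_sum_def by simp
qed

lemma top_sum_sorted:
  fixes a :: "nat \<Rightarrow> real"
  assumes srt: "\<And>i j. i \<le> j \<Longrightarrow> j < n \<Longrightarrow> a j \<le> a i" and m: "m \<le> n"
  shows "top_sum n a m = (\<Sum>i<m. a i)"
  unfolding top_sum_def
proof (rule Max_eqI)
  have "{sum a S | S. S \<subseteq> {..<n} \<and> card S = m} \<subseteq> sum a ` Pow {..<n}" by auto
  then show "finite {sum a S | S. S \<subseteq> {..<n} \<and> card S = m}" by (rule finite_subset) simp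
  show "(\<Sum>i<m. a i) \<in> {sum a S | S. S \<subseteq> {..<n} \<and> card S = m}" using m by force
  fix t assume "t \<in> {sum a S | S. S \<subseteq> {..<n} \<and> card S = m}"
  then obtain S where S: "S \<subseteq> {..<n}" "card S = m" "t = sum a S" by auto
  let ?P = "{..<m}"
  have fS: "finite S" using S(1) finite_subset by blast
  show "t \<le> (\<Sum>i<m. a i)"
  proof (cases "m = 0")
    case True then show ?thesis using S fS by simp
  next
    case False
    define c where "c = a (m - 1)"
    have e1: "sum a S = sum a (S \<inter> ?P) + sum a (S - ?P)"
      using fS by (metis sum.Int_Diff)
    have e2: "sum a ?P = sum a (S \<inter> ?P) + sum a (?P - S)"
      by (metis finite_lessThan sum.Int_Diff inf_commute)
    have cc: "card (S - ?P) = card (?P - S)"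
    proof -
      have "card S = card (S \<inter> ?P) + card (S - ?P)" using fS by (metis card_Int_Diff)
      moreover have "card ?P = card (S \<inter> ?P) + card (?P - S)"
        by (metis finite_lessThan card_Int_Diff inf_commute)
      ultimately show ?thesis using S(2) by simp
    qed
    have "sum a (S - ?P) \<le> of_nat (card (S - ?P)) * c"
      by (rule sum_bounded_above) (use S(1) False srt in \<open>auto simp: c_def\<close>)
    moreover have "of_nat (card (?P - S)) * c \<le> sum a (?P - S)"
      by (rule sum_bounded_below) (use m False srt in \<open>auto simp: c_def\<close>)
    ultimately show ?thesis using S(3) e1 e2 cc by simp
  qed
qed

lemma sum_upd2:
  fixes b :: "nat \<Rightarrow> real"
  assumes "j \<noteq> k"
  shows "(\<Sum>i<m. (b(j := b j - d, k := b k + d)) i) = (\<Sum>i<m. b i) - (if j < m then d else 0) + (if k < m then d else 0)"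
proof -
  have "(\<Sum>i<m. (b(j := b j - d, k := b k + d)) i) = (\<Sum>i<m. b i - (if i = j then d else 0) + (if i = k then d else 0))"
    using assms by (intro sum.cong) auto
  also have "\<dots> = (\<Sum>i<m. b i) - (\<Sum>i<m. if i = j then d else 0) + (\<Sum>i<m. if i = k then d else 0)"
    by (simp add: sum.distrib sum_subtractf)
  finally show ?thesis by simp
qed

lemma mid_sum:
  fixes a b :: "nat \<Rightarrow> real"
  assumes "Suc j \<le> m" "m \<le> k" "\<And>i. j < i \<Longrightarrow> i < k \<Longrightarrow> a i = b i"
  shows "(\<Sum>i<m. b i - a i) = (\<Sum>i<Suc j. b i - a i)"
  using assms(1,2)
proof (induction m rule: dec_induct)
  case base then show ?case by simp
next
  case (step m)
  then have "a m = b m" using assms(3) by auto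
  then show ?case using step by simp
qed

lemma hlp:
  fixes f :: "(nat \<Rightarrow> real) \<Rightarrow> real" and a :: "nat \<Rightarrow> real"
  assumes cong: "\<And>c c'. (\<And>i. i < n \<Longrightarrow> c i = c' i) \<Longrightarrow> f c = f c'"
    and step: "\<And>c j k d. j < k \<Longrightarrow> k < n \<Longrightarrow> (\<And>i. i < n \<Longrightarrow> 0 \<le> c i) \<Longrightarrow> 0 \<le> d \<Longrightarrow>
                 c k + d \<le> c j - d \<Longrightarrow> f c \<le> f (c(j := c j - d, k := c k + d))"
    and sa: "\<And>i j. i \<le> j \<Longrightarrow> j < n \<Longrightarrow> a j \<le> a i"
    and na: "\<And>i. i < n \<Longrightarrow> 0 \<le> a i"
  shows "\<And>b. card {i. i < n \<and> a i \<noteq> b i} = N \<Longrightarrow> (\<And>i j. i \<le> j \<Longrightarrow> j < n \<Longrightarrow> b j \<le> b i) \<Longrightarrow>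
          (\<And>i. i < n \<Longrightarrow> 0 \<le> b i) \<Longrightarrow> (\<And>m. m \<le> n \<Longrightarrow> (\<Sum>i<m. a i) \<le> (\<Sum>i<m. b i)) \<Longrightarrow>
          (\<Sum>i<n. a i) = (\<Sum>i<n. b i) \<Longrightarrow> f b \<le> f a"
proof (induction N rule: less_induct)
  case (less N b)
  note sb = less.prems(2) and nb = less.prems(3) and pre = less.prems(4) and tot = less.prems(5)
  show ?case
  proof (cases "\<forall>i<n. a i = b i")
    case True then show ?thesis using cong[of b a] by auto
  next
    case False
    have exk: "\<exists>k<n. b k < a k"
    proof (rule ccontr)
      assume "\<not> ?thesis"
      then have le: "\<forall>i\<in>{..<n}. a i \<le> b i" by auto
      from False obtain i where i: "i < n" "a i \<noteq> b i" by auto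
      then have "a i < b i" using le by force
      then have "(\<Sum>i<n. a i) < (\<Sum>i<n. b i)"
        using sum_strict_mono_ex1[of "{..<n}" a b] le i by auto
      with tot show False by simp
    qed
    define k where "k = (LEAST k. k < n \<and> b k < a k)"
    have k: "k < n" "b k < a k" using LeastI_ex[OF exk] unfolding k_def by auto
    have bk: "a i \<le> b i" if "i < k" for i
      using not_less_Least[of i "\<lambda>k. k < n \<and> b k < a k"] that k(1) unfolding k_def[symmetric] by auto
    have exj: "\<exists>j<k. a j < b j"
    proof (rule ccontr)
      assume "\<not> ?thesis"
      then have eq: "a i = b i" if "i < k" for i using bk[OF that] that by force
      have "(\<Sum>i<k. b i) = (\<Sum>i<k. a i)" using eq by (intro sum.cong) auto
      then have "(\<Sum>i<Suc k. b i) < (\<Sum>i<Suc k. a i)" using k by simp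
      with pre[of "Suc k"] k(1) show False by simp
    qed
    define J where "J = {j. j < k \<and> a j < b j}"
    define j where "j = Max J"
    have finJ: "finite J" unfolding J_def by (rule finite_subset[of _ "{..<k}"]) auto
    have neJ: "J \<noteq> {}" using exj unfolding J_def by auto
    have j: "j < k" "a j < b j" using Max_in[OF finJ neJ] unfolding j_def J_def by auto
    have bj: "a i = b i" if "j < i" "i < k" for i
    proof (rule ccontr)
      assume "a i \<noteq> b i"
      then have "i \<in> J" using bk[of i] that unfolding J_def by auto
      then have "i \<le> j" unfolding j_def using Max_ge[OF finJ] by auto
      with that show False by simp
    qed
    have jk: "j \<noteq> k" "j < n" using j k by auto
    define d where "d = min (b j - a j) (a k - b k)"
    have d: "0 < d" "d \<le> b j - a j" "d \<le> a k - b k" using j k unfolding d_def by auto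
    define b' where "b' = b(j := b j - d, k := b k + d)"
    have b'j: "b' j = b j - d" and b'k: "b' k = b k + d" and b'o: "\<And>i. i \<noteq> j \<Longrightarrow> i \<noteq> k \<Longrightarrow> b' i = b i"
      unfolding b'_def using jk by auto
    have akj: "a k \<le> a j" using sa[of j k] j k by simp
    have sb': "b' i' \<le> b' i" if ii: "i \<le> i'" "i' < n" for i i'
    proof -
      consider "i = i'" | "i < i'" using ii by linarith
      then show ?thesis
      proof cases
        case 1 then show ?thesis by simp
      next
        case 2
        consider "i' = j" | "i' = k" | "i' \<noteq> j" "i' \<noteq> k" by blast
        then show ?thesis
        proof cases
          case 1
          then have "i \<noteq> j" "i \<noteq> k" using 2 j by auto
          then show ?thesis using 1 b'o b'j sb[of i j] 2 jk d by auto
        next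
          case c2: 2
          consider "i = j" | "i < j" | "j < i" using 2 c2 by linarith
          then show ?thesis
          proof cases
            case 1 then show ?thesis using c2 b'j b'k d akj by auto
          next
            case c3: 2
            then have "i \<noteq> k" using j by auto
            then show ?thesis using c2 c3 b'o[of i] b'j b'k d akj sb[of i j] k j by auto
          next
            case c3: 3
            then have "i \<noteq> k" using 2 c2 by auto
            then have "b' i = a i" using c3 2 c2 b'o[of i] bj[of i] by auto
            moreover have "a k \<le> a i" using sa[of i k] 2 c2 k by auto
            ultimately show ?thesis using c2 b'k d by auto
          qed
        next
          case c2: 3
          then have bi': "b' i' = b i'" using b'o by auto
          consider "i = j" | "i = k" | "i \<noteq> j" "i \<noteq> k" by blast
          then show ?thesis
          proof cases
            case 1
            show ?thesis
            proof (cases "i' < k")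
              case True
              then have "b i' = a i'" using bj[of i'] 1 2 by auto
              moreover have "a i' \<le> a j" using sa[of j i'] 1 2 k True by auto
              ultimately show ?thesis using bi' 1 b'j d by auto
            next
              case False
              then have "k < i'" using c2 by auto
              then have "b i' \<le> b k" using sb[of k i'] ii by auto
              then show ?thesis using bi' 1 b'j d akj by auto
            qed
          next
            case 2
            then show ?thesis using bi' b'k sb[of k i'] ii d by auto
          next
            case 3
            then show ?thesis using bi' b'o[of i] sb ii by auto
          qed
        qed
      qed
    qed
    have nb': "0 \<le> b' i" if "i < n" for i
    proof -
      consider "i = j" | "i = k" | "i \<noteq> j" "i \<noteq> k" by blast
      then show ?thesis
        by cases (use b'j b'k b'o d na[of j] jk nb[of k] k nb[of i] that in auto)
    qed
    have pre': "(\<Sum>i<m. a i) \<le> (\<Sum>i<m. b' i)" if m: "m \<le> n" for m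
    proof -
      have s: "(\<Sum>i<m. b' i) = (\<Sum>i<m. b i) - (if j < m then d else 0) + (if k < m then d else 0)"
        unfolding b'_def by (rule sum_upd2[OF jk(1)])
      consider "m \<le> j" | "j < m" "m \<le> k" | "k < m" by linarith
      then show ?thesis
      proof cases
        case 1 then show ?thesis using s pre[OF m] j by auto
      next
        case 3 then show ?thesis using s pre[OF m] j by auto
      next
        case 2
        have "(\<Sum>i<m. b i - a i) = (\<Sum>i<Suc j. b i - a i)"
          by (rule mid_sum) (use 2 bj in auto)
        also have "\<dots> = (\<Sum>i<j. b i) - (\<Sum>i<j. a i) + (b j - a j)"
          by (simp add: sum_subtractf)
        finally have "(\<Sum>i<m. b i) - (\<Sum>i<m. a i) = (\<Sum>i<j. b i) - (\<Sum>i<j. a i) + (b j - a j)"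
          by (simp add: sum_subtractf)
        moreover have "(\<Sum>i<j. a i) \<le> (\<Sum>i<j. b i)" using pre[of j] jk by auto
        ultimately show ?thesis using s 2 d by auto
      qed
    qed
    have tot': "(\<Sum>i<n. a i) = (\<Sum>i<n. b' i)"
      using sum_upd2[OF jk(1), of b d n] tot jk k unfolding b'_def by simp
    have sub: "{i. i < n \<and> a i \<noteq> b' i} \<subset> {i. i < n \<and> a i \<noteq> b i}"
    proof
      show "{i. i < n \<and> a i \<noteq> b' i} \<subseteq> {i. i < n \<and> a i \<noteq> b i}"
      proof (rule Collect_mono, clarify)
        fix i assume "i < n" "a i \<noteq> b' i" "a i = b i"
        then show False using b'o[of i] j k by (cases "i = j"; cases "i = k") auto
      qed
      show "{i. i < n \<and> a i \<noteq> b' i} \<noteq> {i. i < n \<and> a i \<noteq> b i}"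
      proof (cases "d = b j - a j")
        case True
        then have "b' j = a j" using b'j by simp
        then show ?thesis using j jk by (metis (mono_tags, lifting) mem_Collect_eq order_less_irrefl)
      next
        case False
        then have "d = a k - b k" unfolding d_def by (simp add: min_def split: if_splits)
        then have "b' k = a k" using b'k by simp
        then show ?thesis using k by (metis (mono_tags, lifting) mem_Collect_eq order_less_irrefl)
      qed
    qed
    have "card {i. i < n \<and> a i \<noteq> b' i} < N"
      using psubset_card_mono[OF _ sub] less.prems(1) by auto
    from less.IH[OF this refl sb' nb' pre' tot'] have "f b' \<le> f a" .
    moreover have "f b \<le> f b'"
      unfolding b'_def by (rule step) (use j k d nb akj in auto)
    ultimately show ?thesis by simp
  qed
qed

theorem theorem2:
  fixes n q :: nat
  assumes "n \<ge> 1" and "q \<ge> 1"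
  shows "schur_concave n (\<lambda>a. Rq n q (\<lambda>i. sqrt (a i)))"
  unfolding schur_concave_def
proof (intro allI impI)
  fix a b :: "nat \<Rightarrow> real"
  assume na: "\<forall>i<n. 0 \<le> a i" and nb: "\<forall>i<n. 0 \<le> b i" and maj: "majorized n a b"
  let ?f = "\<lambda>c. Rq n q (\<lambda>i. sqrt (c i))"
  obtain pa where pa: "pa permutes {..<n}" "\<And>i j. i \<le> j \<Longrightarrow> j < n \<Longrightarrow> a (pa j) \<le> a (pa i)"
    using sort_exists[of n a] by blast
  obtain pb where pb: "pb permutes {..<n}" "\<And>i j. i \<le> j \<Longrightarrow> j < n \<Longrightarrow> b (pb j) \<le> b (pb i)"
    using sort_exists[of n b] by blast
  define a' where "a' = (\<lambda>i. a (pa i))"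
  define b' where "b' = (\<lambda>i. b (pb i))"
  have fa: "?f a' = ?f a" unfolding a'_def using Rq_perm[OF pa(1), where x="\<lambda>i. sqrt (a i)" and q=q] by simp
  have fb: "?f b' = ?f b" unfolding b'_def using Rq_perm[OF pb(1), where x="\<lambda>i. sqrt (b i)" and q=q] by simp
  have na': "\<And>i. i < n \<Longrightarrow> 0 \<le> a' i" unfolding a'_def using na permutes_in_image[OF pa(1)] by auto
  have nb': "\<And>i. i < n \<Longrightarrow> 0 \<le> b' i" unfolding b'_def using nb permutes_in_image[OF pb(1)] by auto
  have pre: "(\<Sum>i<m. a' i) \<le> (\<Sum>i<m. b' i)" if m: "m \<le> n" for m
  proof -
    have "(\<Sum>i<m. a' i) = top_sum n a' m" using top_sum_sorted[of n a' m] pa(2) m unfolding a'_def by simp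
    also have "\<dots> = top_sum n a m" unfolding a'_def by (rule top_sum_perm[OF pa(1)])
    also have "\<dots> \<le> top_sum n b m" using maj m unfolding majorized_def by auto
    also have "\<dots> = top_sum n b' m" unfolding b'_def by (rule top_sum_perm[OF pb(1), symmetric])
    also have "\<dots> = (\<Sum>i<m. b' i)" using top_sum_sorted[of n b' m] pb(2) m unfolding b'_def by simp
    finally show ?thesis .
  qed
  have tot: "(\<Sum>i<n. a' i) = (\<Sum>i<n. b' i)"
  proof -
    have "(\<Sum>i<n. a' i) = (\<Sum>i<n. a i)" unfolding a'_def using sum.permute[OF pa(1), of a] by (simp add: o_def)
    also have "\<dots> = (\<Sum>i<n. b i)" using maj unfolding majorized_def by simp
    also have "\<dots> = (\<Sum>i<n. b' i)" unfolding b'_def using sum.permute[OF pb(1), of b] by (simp add: o_def)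
    finally show ?thesis .
  qed
  have "?f b' \<le> ?f a'"
  proof (rule hlp[where f = ?f and n = n and a = a' and N = "card {i. i < n \<and> a' i \<noteq> b' i}"])
    show "?f c = ?f c'" if "\<And>i. i < n \<Longrightarrow> c i = c' i" for c c'
      by (rule Rq_cong) (use that in auto)
    show "?f c \<le> ?f (c(j := c j - d, k := c k + d))"
      if h: "j < k" "k < n" "\<And>i. i < n \<Longrightarrow> 0 \<le> c i" "0 \<le> d" "c k + d \<le> c j - d" for c j k d
    proof (rule pair_step[where j = j and k = k])
      have ck: "0 \<le> c k" using h by auto
      have dj: "d \<le> c j" using h(5) ck h(4) by linarith
      show "\<And>i. i < n \<Longrightarrow> 0 \<le> (c(j := c j - d, k := c k + d)) i"
        using h ck dj by auto
      have "0 \<le> d * (c j - d - c k)" using h by (intro mult_nonneg_nonneg) auto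
      then show "c j * c k \<le> (c(j := c j - d, k := c k + d)) j * (c(j := c j - d, k := c k + d)) k"
        using h by (simp add: algebra_simps)
    qed (use h in auto)
    show "\<And>i j. i \<le> j \<Longrightarrow> j < n \<Longrightarrow> a' j \<le> a' i" unfolding a'_def by (rule pa(2))
    show "\<And>i j. i \<le> j \<Longrightarrow> j < n \<Longrightarrow> b' j \<le> b' i" unfolding b'_def by (rule pb(2))
  qed (use na' nb' pre tot in auto)
  then show "?f b \<le> ?f a" using fa fb by simp
qed

end
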